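(* Let $f:\mathbb F_2^5\to\mathbb F_2$ be $f(x_1,\dots,x_5)=x_1\oplus x_5\oplus x_3(x_2\oplus x_4\oplus x_5)$. Let $r,m$ be even, $n=r+m$, let $a,h_1,h_2:\mathbb F_2^r\to\mathbb F_2$ and $g_1,g_2:\mathbb F_2^m\to\mathbb F_2$, and define $\mathfrak f(x,y)=f(a(x),h_1(x),h_2(x),g_1(y),g_2(y))$ for $(x,y)\in\mathbb F_2^r\times\mathbb F_2^m$. (i) If the four functions $a\oplus c_1h_1\oplus c_2h_2$, $(c_1,c_2)\in\mathbb F_2^2$, are all bent and $g_1,g_2$ are bent, then $W_{\mathfrak f}(u,v)\in\{0,\pm2^{n/2},\pm2^{(n+2)/2}\}$ for all $(u,v)$. (ii) Let $r\ge6$. If $a$ is $4$-plateaued, $a\oplus c_1h_1\oplus c_2h_2$ is $2$-plateaued for every $(c_1,c_2)\ne(0,0)$, the four functions $a\oplus c_1h_1\oplus c_2h_2$, $(c_1,c_2)\in\mathbb F_2^2$, have pairwise disjoint Walsh supports, and $g_1,g_2$ are bent, then $W_{\mathfrak f}(u,v)\in\{0,\pm2^{n/2},\pm2^{(n+2)/2}\}$ for all $(u,v)$.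
   Context: $W_h(\omega)=\sum_x(-1)^{h(x)\oplus\omega\cdot x}$, Walsh support $S_h=\{\omega:W_h(\omega)\ne0\}$. For even $m$, $g$ is bent if $|W_g(\omega)|=2^{m/2}$ for all $\omega$. A function $h$ on $\mathbb F_2^r$ is $s$-plateaued if $W_h(\omega)\in\{0,\pm2^{(r+s)/2}\}$ for all $\omega$. *)

theory Defs
  imports Main
begin

text \<open>Vectors of F_2^r are boolean lists of length r; XOR is (\<noteq>) on bool.\<close>

definition vecs :: "nat \<Rightarrow> bool list set" where
  "vecs r = {xs. length xs = r}"

definition dotp :: "bool list \<Rightarrow> bool list \<Rightarrow> bool" where
  "dotp w x = odd (length (filter id (map2 (\<and>) w x)))"

definition walsh :: "nat \<Rightarrow> (bool list \<Rightarrow> bool) \<Rightarrow> bool list \<Rightarrow> int" where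
  "walsh r h w = (\<Sum>x\<in>vecs r. (if h x \<noteq> dotp w x then -1 else 1))"

definition walsh_support :: "nat \<Rightarrow> (bool list \<Rightarrow> bool) \<Rightarrow> bool list set" where
  "walsh_support r h = {w \<in> vecs r. walsh r h w \<noteq> 0}"

definition bent :: "nat \<Rightarrow> (bool list \<Rightarrow> bool) \<Rightarrow> bool" where
  "bent m g = (\<forall>w\<in>vecs m. \<bar>walsh m g w\<bar> = 2 ^ (m div 2))"

definition plateaued :: "nat \<Rightarrow> nat \<Rightarrow> (bool list \<Rightarrow> bool) \<Rightarrow> bool" where
  "plateaued r s h = (\<forall>w\<in>vecs r. walsh r h w \<in> {0, 2 ^ ((r + s) div 2), - (2 ^ ((r + s) div 2))})"

definition f5 :: "bool \<Rightarrow> bool \<Rightarrow> bool \<Rightarrow> bool \<Rightarrow> bool \<Rightarrow> bool" where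
  "f5 x1 x2 x3 x4 x5 = ((x1 \<noteq> x5) \<noteq> (x3 \<and> ((x2 \<noteq> x4) \<noteq> x5)))"

definition lincomb :: "(bool list \<Rightarrow> bool) \<Rightarrow> (bool list \<Rightarrow> bool) \<Rightarrow> (bool list \<Rightarrow> bool)
    \<Rightarrow> bool \<Rightarrow> bool \<Rightarrow> bool list \<Rightarrow> bool" where
  "lincomb a h1 h2 c1 c2 x = ((a x \<noteq> (c1 \<and> h1 x)) \<noteq> (c2 \<and> h2 x))"

text \<open>The function on F_2^r x F_2^m, identified with F_2^(r+m) by concatenation (x,y) = x @ y.\<close>
definition frakf :: "nat \<Rightarrow> (bool list \<Rightarrow> bool) \<Rightarrow> (bool list \<Rightarrow> bool) \<Rightarrow> (bool list \<Rightarrow> bool)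
    \<Rightarrow> (bool list \<Rightarrow> bool) \<Rightarrow> (bool list \<Rightarrow> bool) \<Rightarrow> bool list \<Rightarrow> bool" where
  "frakf r a h1 h2 g1 g2 z =
     f5 (a (take r z)) (h1 (take r z)) (h2 (take r z)) (g1 (drop r z)) (g2 (drop r z))"

definition three_valued :: "nat \<Rightarrow> int \<Rightarrow> bool" where
  "three_valued n v = (v \<in> {0, 2 ^ (n div 2), - (2 ^ (n div 2)),
                              2 ^ ((n + 2) div 2), - (2 ^ ((n + 2) div 2))})"

end

theory Submission
  imports Defs
begin

definition sg :: "bool \<Rightarrow> int" where "sg b = (if b then -1 else 1)"

lemma pw: "2 * sg (f5 p1 p2 p3 p4 p5 \<noteq> (d1 \<noteq> d2)) =
  sg (p1\<noteq>d1)*sg(p5\<noteq>d2) + sg((p1\<noteq>p3)\<noteq>d1)*sg(p5\<noteq>d2) + sg((p1\<noteq>p2)\<noteq>d1)*sg(p4\<noteq>d2)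
  - sg(((p1\<noteq>p2)\<noteq>p3)\<noteq>d1)*sg(p4\<noteq>d2)"
  by (cases p1; cases p2; cases p3; cases p4; cases p5; cases d1; cases d2; simp add: f5_def sg_def)

lemma bij_app: "bij_betw (\<lambda>(x,y). x @ y) (vecs r \<times> vecs m) (vecs (r+m))"
proof (rule bij_betw_byWitness[where f'="\<lambda>z. (take r z, drop r z)"])
  show "(\<lambda>(x,y). x @ y) ` (vecs r \<times> vecs m) \<subseteq> vecs (r+m)" by (auto simp: vecs_def)
  show "(\<lambda>z. (take r z, drop r z)) ` vecs (r+m) \<subseteq> vecs r \<times> vecs m" by (auto simp: vecs_def)
  show "\<forall>p\<in>vecs r \<times> vecs m. (\<lambda>z. (take r z, drop r z)) ((\<lambda>(x,y). x @ y) p) = p"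
    by (auto simp: vecs_def)
  show "\<forall>z\<in>vecs (r+m). (\<lambda>(x,y). x @ y) (take r z, drop r z) = z" by simp
qed

lemma sum_split: "(\<Sum>z\<in>vecs (r+m). F z) = (\<Sum>x\<in>vecs r. \<Sum>y\<in>vecs m. F (x @ y))"
proof -
  have "(\<Sum>z\<in>vecs (r+m). F z) = (\<Sum>p\<in>vecs r \<times> vecs m. F ((\<lambda>(x,y). x @ y) p))"
    by (rule sum.reindex_bij_betw[OF bij_app, symmetric])
  also have "\<dots> = (\<Sum>x\<in>vecs r. \<Sum>y\<in>vecs m. F (x @ y))"
    by (simp add: sum.cartesian_product split_def)
  finally show ?thesis .
qed

lemma dotp_app: "length u = length x \<Longrightarrow> dotp (u @ v) (x @ y) = (dotp u x \<noteq> dotp v y)"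
  by (simp add: dotp_def zip_append)

lemma walsh_sg: "walsh r h w = (\<Sum>x\<in>vecs r. sg (h x \<noteq> dotp w x))"
  by (simp add: walsh_def sg_def)

lemma prod_sum: "(\<Sum>x\<in>A. \<Sum>y\<in>B. (P x :: int) * Q y) = (\<Sum>x\<in>A. P x) * (\<Sum>y\<in>B. Q y)"
  by (simp add: sum_product)

lemma key:
  assumes u: "u \<in> vecs r" and v: "v \<in> vecs m"
  shows "2 * walsh (r+m) (frakf r a h1 h2 g1 g2) (u @ v) =
     walsh r (lincomb a h1 h2 False False) u * walsh m g2 v
   + walsh r (lincomb a h1 h2 False True) u * walsh m g2 v
   + walsh r (lincomb a h1 h2 True False) u * walsh m g1 v
   - walsh r (lincomb a h1 h2 True True) u * walsh m g1 v"
proof -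
  have "2 * walsh (r+m) (frakf r a h1 h2 g1 g2) (u @ v) =
     (\<Sum>x\<in>vecs r. \<Sum>y\<in>vecs m. 2 * sg (frakf r a h1 h2 g1 g2 (x@y) \<noteq> dotp (u@v) (x@y)))"
    by (simp add: walsh_sg sum_split sum_distrib_left)
  also have "\<dots> = (\<Sum>x\<in>vecs r. \<Sum>y\<in>vecs m.
      sg (a x \<noteq> dotp u x) * sg (g2 y \<noteq> dotp v y)
    + sg ((a x \<noteq> h2 x) \<noteq> dotp u x) * sg (g2 y \<noteq> dotp v y)
    + sg ((a x \<noteq> h1 x) \<noteq> dotp u x) * sg (g1 y \<noteq> dotp v y)
    - sg (((a x \<noteq> h1 x) \<noteq> h2 x) \<noteq> dotp u x) * sg (g1 y \<noteq> dotp v y))"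
  proof (intro sum.cong refl)
    fix x y assume "x \<in> vecs r" "y \<in> vecs m"
    then have "length u = length x" using u by (simp add: vecs_def)
    then show "2 * sg (frakf r a h1 h2 g1 g2 (x@y) \<noteq> dotp (u@v) (x@y)) =
      sg (a x \<noteq> dotp u x) * sg (g2 y \<noteq> dotp v y)
    + sg ((a x \<noteq> h2 x) \<noteq> dotp u x) * sg (g2 y \<noteq> dotp v y)
    + sg ((a x \<noteq> h1 x) \<noteq> dotp u x) * sg (g1 y \<noteq> dotp v y)
    - sg (((a x \<noteq> h1 x) \<noteq> h2 x) \<noteq> dotp u x) * sg (g1 y \<noteq> dotp v y)"
      using \<open>x \<in> vecs r\<close>
    proof -
      assume L: "length u = length x" "x \<in> vecs r"
      have t: "take r (x@y) = x" "drop r (x@y) = y" using L(2) by (auto simp: vecs_def)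
      have d: "dotp (u@v) (x@y) = (dotp u x \<noteq> dotp v y)" using L(1) by (rule dotp_app)
      show ?thesis unfolding frakf_def t d by (rule pw)
    qed
  qed
  also have "\<dots> = walsh r (lincomb a h1 h2 False False) u * walsh m g2 v
   + walsh r (lincomb a h1 h2 False True) u * walsh m g2 v
   + walsh r (lincomb a h1 h2 True False) u * walsh m g1 v
   - walsh r (lincomb a h1 h2 True True) u * walsh m g1 v"
    by (simp add: sum.distrib sum_subtractf prod_sum walsh_sg lincomb_def)
  finally show ?thesis .
qed

lemma pairsum: fixes X Y Q R M :: int
  assumes "X \<in> {R,-R}" "Y \<in> {R,-R}" "Q \<in> {M,-M}"
  shows "X*Q + Y*Q \<in> {0, 2*(R*M), -(2*(R*M))}" "X*Q - Y*Q \<in> {0, 2*(R*M), -(2*(R*M))}"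
  using assms by auto

lemma halfsum: fixes A B K W :: int
  assumes "A \<in> {0, 2*K, -(2*K)}" "B \<in> {0, 2*K, -(2*K)}" "2*W = A + B"
  shows "W \<in> {0, K, -K, 2*K, -(2*K)}"
  using assms by auto

lemma arith1:
  fixes X Y Z T P Q R M W :: int
  assumes "X \<in> {R,-R}" "Y \<in> {R,-R}" "Z \<in> {R,-R}" "T \<in> {R,-R}" "P \<in> {M,-M}" "Q \<in> {M,-M}"
    and "2*W = X*Q + Y*Q + Z*P - T*P"
  shows "W \<in> {0, R*M, -(R*M), 2*(R*M), -(2*(R*M))}"
proof -
  have "2*W = (X*Q + Y*Q) + (Z*P - T*P)" using assms(7) by simp
  moreover have "X*Q + Y*Q \<in> {0, 2*(R*M), -(2*(R*M))}" by (rule pairsum(1)[OF assms(1,2,6)])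
  moreover have "Z*P - T*P \<in> {0, 2*(R*M), -(2*(R*M))}" by (rule pairsum(2)[OF assms(3,4,5)])
  ultimately show ?thesis using halfsum by blast
qed

lemma single: fixes X Q R M W :: int
  assumes "X \<in> {0, c*R, -(c*R)}" "Q \<in> {M,-M}" "2*W = X*Q" "c = 2 \<or> c = 4"
  shows "W \<in> {0, R*M, -(R*M), 2*(R*M), -(2*(R*M))}"
  using assms by (auto simp: algebra_simps)

lemma arith2:
  fixes X Y Z T P Q R M W :: int
  assumes "X \<in> {0,4*R,-(4*R)}" "Y \<in> {0,2*R,-(2*R)}" "Z \<in> {0,2*R,-(2*R)}" "T \<in> {0,2*R,-(2*R)}"
    "P \<in> {M,-M}" "Q \<in> {M,-M}"
    "X = 0 \<or> Y = 0" "X = 0 \<or> Z = 0" "X = 0 \<or> T = 0" "Y = 0 \<or> Z = 0" "Y = 0 \<or> T = 0" "Z = 0 \<or> T = 0"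
    and "2*W = X*Q + Y*Q + Z*P - T*P"
  shows "W \<in> {0, R*M, -(R*M), 2*(R*M), -(2*(R*M))}"
proof (cases "X \<noteq> 0")
  case True then show ?thesis using assms single[of X 4 R Q M W] by auto
next
  case f1: False
  show ?thesis
  proof (cases "Y \<noteq> 0")
    case True then show ?thesis using assms f1 single[of Y 2 R Q M W] by auto
  next
    case f2: False
    show ?thesis
    proof (cases "Z \<noteq> 0")
      case True then show ?thesis using assms f1 f2 single[of Z 2 R P M W] by auto
    next
      case f3: False
      have "-T \<in> {0, 2*R, -(2*R)}" using assms(4) by auto
      then show ?thesis using assms f1 f2 f3 single[of "-T" 2 R P M W] by auto
    qed
  qed
qed
theorem mainTheorem9:
  fixes r m n :: nat and a h1 h2 g1 g2 :: "bool list \<Rightarrow> bool"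
  assumes "even r" and "even m" and "n = r + m"
  shows "((\<forall>c1 c2. bent r (lincomb a h1 h2 c1 c2)) \<and> bent m g1 \<and> bent m g2
            \<longrightarrow> (\<forall>u\<in>vecs r. \<forall>v\<in>vecs m.
                  three_valued n (walsh n (frakf r a h1 h2 g1 g2) (u @ v))))
       \<and> (r \<ge> 6 \<and> plateaued r 4 a
            \<and> (\<forall>c1 c2. (c1, c2) \<noteq> (False, False) \<longrightarrow> plateaued r 2 (lincomb a h1 h2 c1 c2))
            \<and> (\<forall>c1 c2 d1 d2. (c1, c2) \<noteq> (d1, d2) \<longrightarrow>
                 walsh_support r (lincomb a h1 h2 c1 c2) \<inter> walsh_support r (lincomb a h1 h2 d1 d2) = {})
            \<and> bent m g1 \<and> bent m g2
            \<longrightarrow> (\<forall>u\<in>vecs r. \<forall>v\<in>vecs m.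
                  three_valued n (walsh n (frakf r a h1 h2 g1 g2) (u @ v))))"
proof -
  define R :: int where "R = 2 ^ (r div 2)"
  define M :: int where "M = 2 ^ (m div 2)"
  obtain i where ri: "r = 2*i" using assms(1) by (elim evenE)
  obtain j where mj: "m = 2*j" using assms(2) by (elim evenE)
  have Ri: "R = 2^i" using ri by (simp add: R_def)
  have Mj: "M = 2^j" using mj by (simp add: M_def)
  have n1: "n div 2 = i + j" using assms(3) ri mj by simp
  have n2: "(n+2) div 2 = Suc (i + j)" using assms(3) ri mj by simp
  have r4': "(r+4) div 2 = i + 2" using ri by simp
  have r2': "(r+2) div 2 = Suc i" using ri by simp
  have nR: "(2::int) ^ (n div 2) = R * M" unfolding n1 Ri Mj by (simp add: power_add)
  have nR2: "(2::int) ^ ((n+2) div 2) = 2 * (R * M)" unfolding n2 Ri Mj by (simp add: power_add)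
  have r4: "(2::int) ^ ((r+4) div 2) = 4 * R" unfolding r4' Ri by (simp add: power_add)
  have r2: "(2::int) ^ ((r+2) div 2) = 2 * R" unfolding r2' Ri by simp
  have a0: "lincomb a h1 h2 False False = a" by (rule ext) (simp add: lincomb_def)
  have bentv: "walsh k g w \<in> {2^(k div 2), -(2^(k div 2))}" if "bent k g" "w \<in> vecs k" for k g w
  proof -
    have "\<bar>walsh k g w\<bar> = 2^(k div 2)" using that unfolding bent_def by blast
    then show ?thesis by (cases "walsh k g w \<ge> 0") auto
  qed
  let ?L = "\<lambda>c1 c2. walsh r (lincomb a h1 h2 c1 c2)"
  have G: "walsh m g v \<in> {M,-M}" if "bent m g" "v \<in> vecs m" for g v
    using bentv[OF that] unfolding M_def .
  have fin: "three_valued n W" if "W \<in> {0, R*M, -(R*M), 2*(R*M), -(2*(R*M))}" for W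
    using that unfolding three_valued_def nR nR2 by simp
  have K: "2 * walsh n (frakf r a h1 h2 g1 g2) (u @ v) = ?L False False u * walsh m g2 v + ?L False True u * walsh m g2 v
         + ?L True False u * walsh m g1 v - ?L True True u * walsh m g1 v" if u: "u \<in> vecs r" and v: "v \<in> vecs m" for u v
    using key[OF u v, of a h1 h2 g1 g2] assms(3) by simp
  show ?thesis
  proof (intro conjI impI ballI)
    fix u v assume H: "(\<forall>c1 c2. bent r (lincomb a h1 h2 c1 c2)) \<and> bent m g1 \<and> bent m g2"
      and u: "u \<in> vecs r" and v: "v \<in> vecs m"
    have b1: "?L c1 c2 u \<in> {R, -R}" for c1 c2
    proof -
      have "bent r (lincomb a h1 h2 c1 c2)" using H by blast
      from bentv[OF this u] show ?thesis unfolding R_def .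
    qed
    have G1: "walsh m g1 v \<in> {M,-M}" using H v G by blast
    have G2: "walsh m g2 v \<in> {M,-M}" using H v G by blast
    show "three_valued n (walsh n (frakf r a h1 h2 g1 g2) (u @ v))"
      by (rule fin, rule arith1[OF b1 b1 b1 b1 G1 G2 K[OF u v]])
  next
    fix u v assume H: "6 \<le> r \<and> plateaued r 4 a \<and>
       (\<forall>c1 c2. (c1, c2) \<noteq> (False, False) \<longrightarrow> plateaued r 2 (lincomb a h1 h2 c1 c2)) \<and>
       (\<forall>c1 c2 d1 d2. (c1, c2) \<noteq> (d1, d2) \<longrightarrow>
          walsh_support r (lincomb a h1 h2 c1 c2) \<inter> walsh_support r (lincomb a h1 h2 d1 d2) = {}) \<and>
       bent m g1 \<and> bent m g2"
      and u: "u \<in> vecs r" and v: "v \<in> vecs m"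
    have disj: "?L c1 c2 u = 0 \<or> ?L d1 d2 u = 0" if "(c1,c2) \<noteq> (d1,d2)" for c1 c2 d1 d2
    proof -
      have H4: "\<forall>c1 c2 d1 d2. (c1, c2) \<noteq> (d1, d2) \<longrightarrow>
          walsh_support r (lincomb a h1 h2 c1 c2) \<inter> walsh_support r (lincomb a h1 h2 d1 d2) = {}"
        using H by (elim conjE)
      have E: "walsh_support r (lincomb a h1 h2 c1 c2) \<inter> walsh_support r (lincomb a h1 h2 d1 d2) = {}"
        by (rule H4[rule_format, OF that])
      show ?thesis
      proof (rule ccontr)
        assume "\<not> ?thesis"
        then have "u \<in> walsh_support r (lincomb a h1 h2 c1 c2) \<inter> walsh_support r (lincomb a h1 h2 d1 d2)"
          using u unfolding walsh_support_def by blast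
        then show False unfolding E by (rule emptyE)
      qed
    qed
    have pa: "?L False False u \<in> {0, 4*R, -(4*R)}"
    proof -
      have "plateaued r 4 a" using H by (elim conjE)
      then have "walsh r a u \<in> {0, 2 ^ ((r + 4) div 2), - (2 ^ ((r + 4) div 2))}" using u unfolding plateaued_def by blast
      then show ?thesis unfolding a0 r4 .
    qed
    have p2: "?L c1 c2 u \<in> {0, 2*R, -(2*R)}" if "(c1,c2) \<noteq> (False,False)" for c1 c2
    proof -
      have H3: "\<forall>c1 c2. (c1, c2) \<noteq> (False, False) \<longrightarrow> plateaued r 2 (lincomb a h1 h2 c1 c2)"
        using H by (elim conjE)
      have "plateaued r 2 (lincomb a h1 h2 c1 c2)" by (rule H3[rule_format, OF that])
      then have "?L c1 c2 u \<in> {0, 2 ^ ((r + 2) div 2), - (2 ^ ((r + 2) div 2))}" using u unfolding plateaued_def by blast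
      then show ?thesis unfolding r2 .
    qed
    have B1: "bent m g1" using H by (elim conjE)
    have B2: "bent m g2" using H by (elim conjE)
    note G1 = G[OF B1 v] and G2 = G[OF B2 v]
    show "three_valued n (walsh n (frakf r a h1 h2 g1 g2) (u @ v))"
      apply (rule fin)
      apply (rule arith2[OF pa p2 p2 p2 G1 G2
          disj[of False False False True] disj[of False False True False] disj[of False False True True]
          disj[of False True True False] disj[of False True True True] disj[of True False True True] K[OF u v]])
      by simp_all
  qed
qed

end
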